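(* Let $\omega\in(0,1/2)$, $\tau>0$ and $a,b>0$ degrees of freedom. Suppose the test statistic $f$ satisfies $f\mid\lambda\sim\mathrm{F}_{a,b}(\lambda)$, with $\lambda\sim(1-\omega)\delta_0+\omega\,\mathrm{G}(a/2+1,\,1/(2\tau^2))$ under $\mathrm{H}_0$ and $\lambda\sim\omega\delta_0+(1-\omega)\mathrm{G}(a/2+1,\,1/(2\tau^2))$ under $\mathrm{H}_1$. Then the Bayes factor in favor of $\mathrm{H}_1$ is $$\mathrm{BF}^t_{10}(f\mid\tau^2,\omega)=\frac{\omega+(1-\omega)R}{(1-\omega)+\omega R},$$ where $R=m_1(f\mid\tau^2)/m_0(f)$, with $m_0(f)$ the central $\mathrm{F}_{a,b}$ density at $f$ and $m_1(f\mid\tau^2)$ the marginal density of $f$ when $\lambda\sim\mathrm{G}(a/2+1,1/(2\tau^2))$, and $$R=(1+\tau^2)^{-a/2-1}\,{}_2F_1\!\left(\tfrac a2+1,\ \tfrac{a+b}{2},\ \tfrac a2;\ \frac{af\tau^2}{(1+\tau^2)(b+af)}\right).$$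
   Context: $\delta_0$ is the point mass at $0$. $\mathrm{F}_{a,b}(\lambda)$ is the noncentral F distribution with degrees of freedom $(a,b)$ and noncentrality parameter $\lambda$. $\mathrm{G}(\alpha,\theta)$ is the gamma distribution with shape $\alpha$ and rate $\theta$. ${}_2F_1(\alpha,\beta,\gamma;x)=\sum_{i\ge0}\frac{(\alpha)_i(\beta)_i}{(\gamma)_i\,i!}x^i$ is the Gauss hypergeometric function, $(\cdot)_i$ the rising factorial. The Bayes factor is the ratio of the marginal density of $f$ under $\mathrm{H}_1$ to that under $\mathrm{H}_0$. *)

theory Defs
  imports "HOL-Analysis.Analysis"
begin

definition hyp2F1 :: "real \<Rightarrow> real \<Rightarrow> real \<Rightarrow> real \<Rightarrow> real" where
  "hyp2F1 \<alpha> \<beta> \<gamma> x =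
     (\<Sum>i. pochhammer \<alpha> i * pochhammer \<beta> i / (pochhammer \<gamma> i * fact i) * x ^ i)"

definition F_density :: "real \<Rightarrow> real \<Rightarrow> real \<Rightarrow> real" where
  "F_density a b x =
     (if x > 0 then (a / b) powr (a / 2) * x powr (a / 2 - 1)
        * (1 + a * x / b) powr (- (a + b) / 2) / Beta (a / 2) (b / 2)
      else 0)"

definition ncF_density :: "real \<Rightarrow> real \<Rightarrow> real \<Rightarrow> real \<Rightarrow> real" where
  "ncF_density a b lam x =
     (if x > 0 then
        (\<Sum>k. exp (- lam / 2) * (lam / 2) ^ k / fact k
           * (a / b) powr (a / 2 + real k) * x powr (a / 2 + real k - 1)
           * (1 + a * x / b) powr (- (a + b) / 2 - real k)
           / Beta (a / 2 + real k) (b / 2))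
      else 0)"

definition gamma_density :: "real \<Rightarrow> real \<Rightarrow> real \<Rightarrow> real" where
  "gamma_density \<alpha> \<theta> x =
     (if x > 0 then \<theta> powr \<alpha> * x powr (\<alpha> - 1) * exp (- \<theta> * x) / Gamma \<alpha> else 0)"

definition m1 :: "real \<Rightarrow> real \<Rightarrow> real \<Rightarrow> real \<Rightarrow> real" where
  "m1 a b \<tau> x =
     (LINT lam|lborel. ncF_density a b lam x * gamma_density (a / 2 + 1) (1 / (2 * \<tau>\<^sup>2)) lam)"

definition spike_slab_marginal :: "real \<Rightarrow> real \<Rightarrow> real \<Rightarrow> real \<Rightarrow> real \<Rightarrow> real" where
  "spike_slab_marginal a b \<tau> p x =
     (1 - p) * ncF_density a b 0 x
     + p * (LINT lam|lborel. ncF_density a b lam x * gamma_density (a / 2 + 1) (1 / (2 * \<tau>\<^sup>2)) lam)"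

text \<open>Bayes factor in favour of H1: under H0 the slab weight is omega, under H1 it is 1-omega.\<close>
definition BF10 :: "real \<Rightarrow> real \<Rightarrow> real \<Rightarrow> real \<Rightarrow> real \<Rightarrow> real" where
  "BF10 a b \<tau> \<omega> x = spike_slab_marginal a b \<tau> (1 - \<omega>) x / spike_slab_marginal a b \<tau> \<omega> x"

end

theory Submission
  imports Defs "HOL-Real_Asymp.Real_Asymp"
begin


lemma gamma_nn:
  fixes s c :: real assumes s: "s > 0" and c: "c > 0"
  shows "(\<integral>\<^sup>+x. ennreal (if x > 0 then x powr (s-1) * exp (-c*x) else 0) \<partial>lborel)
         = ennreal (Gamma s / c powr s)"
proof -
  define F where "F = (\<lambda>t::real. if t > 0 then t powr (s-1) * exp (-t) else 0)"
  have Fm[measurable]: "F \<in> borel_measurable borel" unfolding F_def by measurable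
  have "((\<lambda>t. if t \<in> {0..} then t powr (s-1)/exp t else 0) has_integral Gamma s) UNIV"
    using Gamma_integral_real[OF s] by (simp only: has_integral_restrict_UNIV)
  moreover have "(\<lambda>t::real. if t \<in> {0..} then t powr (s-1)/exp t else 0) = F"
    by (auto simp: F_def fun_eq_iff exp_minus field_simps)
  ultimately have FI: "(F has_integral Gamma s) UNIV" by simp
  have F1: "(\<integral>\<^sup>+x. ennreal (F x) \<partial>lborel) = ennreal (Gamma s)"
    by (rule nn_integral_has_integral_lborel[OF Fm _ FI]) (auto simp: F_def)
  have F2: "(\<integral>\<^sup>+x. ennreal (F (c*x)) \<partial>lborel) = ennreal (1/c) * ennreal (Gamma s)"
  proof -
    have m: "(\<lambda>x. ennreal (F (c*x))) \<in> borel_measurable borel" by measurable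
    have "(\<integral>\<^sup>+x. ennreal (F (c*x)) \<partial>lborel) = \<bar>1/c\<bar> * (\<integral>\<^sup>+x. ennreal (F (c*(0 + 1/c*x))) \<partial>lborel)"
      by (rule nn_integral_real_affine[OF m]) (use c in auto)
    also have "\<dots> = ennreal (1/c) * ennreal (Gamma s)" using c F1 by simp
    finally show ?thesis .
  qed
  have "(\<integral>\<^sup>+x. ennreal (if x > 0 then x powr (s-1) * exp (-c*x) else 0) \<partial>lborel)
      = (\<integral>\<^sup>+x. ennreal (c powr (1-s)) * ennreal (F (c*x)) \<partial>lborel)"
  proof (rule nn_integral_cong)
    fix x :: real
    show "ennreal (if x > 0 then x powr (s-1) * exp (-c*x) else 0) = ennreal (c powr (1-s)) * ennreal (F (c*x))"
    proof (cases "x > 0")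
      case True
      have "c powr (1-s) * ((c*x) powr (s-1) * exp (-(c*x))) = x powr (s-1) * exp (-c*x)"
        using c True by (simp add: powr_mult powr_diff powr_add field_simps)
      then show ?thesis using True c by (simp add: F_def ennreal_mult[symmetric] zero_less_mult_iff)
    next
      case False
      then show ?thesis using c by (simp add: F_def zero_less_mult_iff)
    qed
  qed
  also have "\<dots> = ennreal (c powr (1-s)) * (ennreal (1/c) * ennreal (Gamma s))"
    by (subst nn_integral_cmult) (auto simp: F2)
  also have "\<dots> = ennreal (Gamma s / c powr s)"
    using c s by (simp add: ennreal_mult[symmetric] powr_diff field_simps)
  finally show ?thesis .
qed



lemma ratio_summable:
  fixes u r :: "nat \<Rightarrow> real"
  assumes u: "\<And>n. \<bar>u (Suc n)\<bar> \<le> r n * \<bar>u n\<bar>" and r: "r \<longlonglongrightarrow> L" and L: "L < 1"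
  shows "summable u"
proof -
  have "eventually (\<lambda>n. r n < (L+1)/2) sequentially"
    using order_tendstoD(2)[OF r, of "(L+1)/2"] L by simp
  then obtain N where N: "\<And>n. n \<ge> N \<Longrightarrow> r n < (L+1)/2" by (auto simp: eventually_sequentially)
  show ?thesis
  proof (rule summable_ratio_test[of "(L+1)/2" N])
    show "(L+1)/2 < 1" using L by simp
    fix n assume "n \<ge> N"
    hence "r n * \<bar>u n\<bar> \<le> (L+1)/2 * \<bar>u n\<bar>" using N[of n] by (intro mult_right_mono) (auto simp: less_imp_le)
    thus "norm (u (Suc n)) \<le> (L+1)/2 * norm (u n)" using u[of n] by simp
  qed
qed

lemma hyp_summable:
  fixes \<alpha> \<beta> \<gamma> z :: real
  assumes "\<alpha> > 0" "\<beta> > 0" "\<gamma> > 0" "0 \<le> z" "z < 1"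
  shows "summable (\<lambda>i. pochhammer \<alpha> i * pochhammer \<beta> i / (pochhammer \<gamma> i * fact i) * z ^ i)"
proof (rule ratio_summable)
  let ?u = "\<lambda>i. pochhammer \<alpha> i * pochhammer \<beta> i / (pochhammer \<gamma> i * fact i) * z ^ i"
  let ?r = "\<lambda>n. (\<alpha> + real n) * (\<beta> + real n) / ((\<gamma> + real n) * (real n + 1)) * z"
  fix n
  have pg: "pochhammer \<gamma> n > 0" using assms by (intro pochhammer_pos) auto
  have "?u (Suc n) = ?r n * ?u n"
    using assms pg by (simp add: pochhammer_rec' field_simps)
  moreover have "?r n \<ge> 0" using assms by auto
  ultimately show "\<bar>?u (Suc n)\<bar> \<le> ?r n * \<bar>?u n\<bar>" by (metis abs_mult abs_of_nonneg order_refl)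
next
  show "(\<lambda>n. (\<alpha> + real n) * (\<beta> + real n) / ((\<gamma> + real n) * (real n + 1)) * z) \<longlonglongrightarrow> z"
    by real_asymp
  show "z < 1" by fact
qed



lemma Gamma_shift: "(x::real) > 0 \<Longrightarrow> Gamma (x + real k) = pochhammer x k * Gamma x"
proof -
  assume x: "x > 0"
  hence "x \<notin> \<int>\<^sub>\<le>\<^sub>0" by (auto simp: nonpos_Ints_def)
  from pochhammer_Gamma[OF this, of k] show ?thesis using Gamma_real_pos[OF x] by (simp add: field_simps)
qed

lemma aux1: fixes P A Q F R D B pa pb :: real
  shows "B \<noteq> 0 \<Longrightarrow> pa \<noteq> 0 \<Longrightarrow> pb \<noteq> 0 \<Longrightarrow> D \<noteq> 0 \<Longrightarrow>
   (P*A)*(Q*F)*(R/D)/(B*pa/pb) = (P*Q*R/B)*(A*F/D)*pb/pa"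
  by (simp add: field_simps)

lemma aux2: fixes G1 G2 G3 pa pb :: real
  shows "pb \<noteq> 0 \<Longrightarrow> G3 \<noteq> 0 \<Longrightarrow> pa * G1 * G2 / (pb * G3) = G1 * G2 / G3 * pa / pb"
  by (simp add: field_simps)

lemma T_eq:
  fixes a b f :: real assumes a: "a>0" and b: "b>0" and f: "f>0"
  shows "(a/b) powr (a/2 + real k) * f powr (a/2 + real k - 1) * (1 + a*f/b) powr (-(a+b)/2 - real k)
            / Beta (a/2 + real k) (b/2)
     = F_density a b f * (a*f/(b+a*f))^k * pochhammer ((a+b)/2) k / pochhammer (a/2) k"
proof -
  have p1: "(a/b) powr (a/2 + real k) = (a/b) powr (a/2) * (a/b)^k"
    using a b by (simp add: powr_add powr_realpow)
  have p2: "f powr (a/2 + real k - 1) = f powr (a/2 - 1) * f^k"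
  proof -
    have "f powr (a/2 + real k - 1) = f powr ((a/2 - 1) + real k)" by (simp add: algebra_simps)
    also have "\<dots> = f powr (a/2 - 1) * f^k" using f by (simp add: powr_add powr_realpow)
    finally show ?thesis .
  qed
  have p3: "(1 + a*f/b) powr (-(a+b)/2 - real k) = (1 + a*f/b) powr (-(a+b)/2) / (1 + a*f/b)^k"
  proof -
    have "0 < 1 + a*f/b" using a b f by (simp add: add_pos_pos)
    thus ?thesis by (simp add: powr_diff powr_realpow)
  qed
  have g1: "Gamma (a/2 + real k) = pochhammer (a/2) k * Gamma (a/2)" using a by (simp add: Gamma_shift)
  have g2: "Gamma (a/2 + real k + b/2) = pochhammer ((a+b)/2) k * Gamma ((a+b)/2)"
    using Gamma_shift[of "(a+b)/2" k] a b by (simp add: add_divide_distrib algebra_simps)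
  have pa: "pochhammer (a/2) k > 0" using a by (intro pochhammer_pos) auto
  have pb: "pochhammer ((a+b)/2) k > 0" using a b by (intro pochhammer_pos) auto
  have gp: "Gamma ((a+b)/2) > 0" by (rule Gamma_real_pos) (use a b in simp)
  have gp0: "Gamma ((a+b)/2) \<noteq> 0" using gp by linarith
  have B: "Beta (a/2 + real k) (b/2) = Beta (a/2) (b/2) * pochhammer (a/2) k / pochhammer ((a+b)/2) k"
  proof -
    have "Beta (a/2 + real k) (b/2) = Gamma (a/2 + real k) * Gamma (b/2) / Gamma (a/2 + real k + b/2)"
      by (simp add: Beta_def)
    also have "\<dots> = pochhammer (a/2) k * Gamma (a/2) * Gamma (b/2) / (pochhammer ((a+b)/2) k * Gamma ((a+b)/2))"
      by (simp only: g1 g2)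
    also have "\<dots> = Gamma (a/2) * Gamma (b/2) / Gamma ((a+b)/2) * pochhammer (a/2) k / pochhammer ((a+b)/2) k"
      using pb by (intro aux2[OF _ gp0]) auto
    also have "\<dots> = Beta (a/2) (b/2) * pochhammer (a/2) k / pochhammer ((a+b)/2) k"
      by (simp add: Beta_def add_divide_distrib)
    finally show ?thesis .
  qed
  have y: "(a/b)^k * f^k / (1 + a*f/b)^k = (a*f/(b+a*f))^k"
  proof -
    have "(a/b)^k * f^k / (1 + a*f/b)^k = ((a/b) * f / (1 + a*f/b))^k" by (simp add: power_mult_distrib power_divide)
    also have "(a/b) * f / (1 + a*f/b) = a*f/(b+a*f)" using a b f by (simp add: field_simps)
    finally show ?thesis .
  qed
  have hp: "1 + a*f/b > 0" using a b f by (simp add: add_pos_pos)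
  have Bp: "Beta (a/2) (b/2) > 0" using a b by (simp add: Beta_def)
  have "(a/b) powr (a/2 + real k) * f powr (a/2 + real k - 1) * (1 + a*f/b) powr (-(a+b)/2 - real k)
            / Beta (a/2 + real k) (b/2)
     = ((a/b) powr (a/2) * f powr (a/2 - 1) * (1 + a*f/b) powr (-(a+b)/2) / Beta (a/2) (b/2))
       * ((a/b)^k * f^k / (1 + a*f/b)^k) * pochhammer ((a+b)/2) k / pochhammer (a/2) k"
    unfolding p1 p2 p3 B using pa pb Bp hp by (intro aux1) auto
  also have "\<dots> = F_density a b f * (a*f/(b+a*f))^k * pochhammer ((a+b)/2) k / pochhammer (a/2) k"
    unfolding y using f by (simp add: F_density_def)
  finally show ?thesis .
qed



lemma aux3: fixes E P F T g C Ga :: real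
  shows "E * P / F * T * (g * L * X / Ga) = (T * g / (Ga * F)) * (P * L) * (E * X)"
  by (simp add: field_simps)

lemma term_integral:
  fixes \<alpha> \<theta> T :: real
  assumes al: "\<alpha> > 0" and th: "\<theta> > 0" and T: "T \<ge> 0"
  shows "(\<integral>\<^sup>+lam. ennreal (exp (- lam / 2) * (lam / 2) ^ k / fact k * T * gamma_density \<alpha> \<theta> lam) \<partial>lborel)
       = ennreal (T * (\<theta> powr \<alpha> * Gamma (\<alpha> + real k) / (Gamma \<alpha> * 2^k * fact k * (\<theta> + 1/2) powr (\<alpha> + real k))))"
proof -
  define K where "K = T * \<theta> powr \<alpha> / (Gamma \<alpha> * fact k) / 2^k"
  have K0: "K \<ge> 0" using T al unfolding K_def by simp
  have "(\<integral>\<^sup>+lam. ennreal (exp (- lam / 2) * (lam / 2) ^ k / fact k * T * gamma_density \<alpha> \<theta> lam) \<partial>lborel)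
      = (\<integral>\<^sup>+lam. ennreal K * ennreal (if lam > 0 then lam powr ((\<alpha> + real k) - 1) * exp (-(\<theta> + 1/2)*lam) else 0) \<partial>lborel)"
  proof (rule nn_integral_cong)
    fix lam :: real
    show "ennreal (exp (- lam / 2) * (lam / 2) ^ k / fact k * T * gamma_density \<alpha> \<theta> lam)
        = ennreal K * ennreal (if lam > 0 then lam powr ((\<alpha> + real k) - 1) * exp (-(\<theta> + 1/2)*lam) else 0)"
    proof (cases "lam > 0")
      case True
      have e1: "(lam/2)^k * lam powr (\<alpha> - 1) = lam powr ((\<alpha> + real k) - 1) / 2^k"
        using True by (simp add: power_divide powr_add powr_realpow[symmetric] algebra_simps
                       flip: powr_add)
      have e2: "exp (- lam / 2) * exp (- \<theta> * lam) = exp (-(\<theta> + 1/2)*lam)"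
        by (simp add: exp_add[symmetric] algebra_simps)
      have "exp (- lam / 2) * (lam / 2) ^ k / fact k * T * gamma_density \<alpha> \<theta> lam
          = (T * \<theta> powr \<alpha> / (Gamma \<alpha> * fact k)) * ((lam/2)^k * lam powr (\<alpha> - 1)) * (exp (- lam / 2) * exp (- \<theta> * lam))"
        unfolding gamma_density_def if_P[OF True] by (rule aux3)
      also have "\<dots> = K * (lam powr ((\<alpha> + real k) - 1) * exp (-(\<theta> + 1/2)*lam))"
        unfolding e1 e2 K_def by simp
      finally show ?thesis using True K0 by (simp add: ennreal_mult)
    next
      case False
      then show ?thesis by (simp add: gamma_density_def)
    qed
  qed
  also have "\<dots> = ennreal K * ennreal (Gamma (\<alpha> + real k) / (\<theta> + 1/2) powr (\<alpha> + real k))"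
    by (subst nn_integral_cmult) (auto simp: gamma_nn al th add_pos_nonneg)
  also have "\<dots> = ennreal (T * (\<theta> powr \<alpha> * Gamma (\<alpha> + real k) / (Gamma \<alpha> * 2^k * fact k * (\<theta> + 1/2) powr (\<alpha> + real k))))"
  proof -
    have G0: "Gamma (\<alpha> + real k) / (\<theta> + 1/2) powr (\<alpha> + real k) \<ge> 0"
      using al by (intro divide_nonneg_nonneg) (auto intro: less_imp_le)
    show ?thesis by (subst ennreal_mult[OF K0 G0, symmetric]) (simp add: K_def field_simps)
  qed
  finally show ?thesis .
qed



lemma aux4: fixes g P Ga F tw c2 C :: real
  shows "Ga \<noteq> 0 \<Longrightarrow> F \<noteq> 0 \<Longrightarrow> C \<noteq> 0 \<Longrightarrow> c2 \<noteq> 0 \<Longrightarrow>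
    g * (P * Ga) / (Ga * tw * F * (C * c2)) = (g / C) * (P / F) * (1 / (tw * c2))"
  by (simp add: field_simps)

lemma W_eq:
  fixes \<alpha> \<tau> :: real assumes al: "\<alpha> > 0" and ta: "\<tau> > 0"
  shows "(1/(2*\<tau>\<^sup>2)) powr \<alpha> * Gamma (\<alpha> + real k) / (Gamma \<alpha> * 2^k * fact k * (1/(2*\<tau>\<^sup>2) + 1/2) powr (\<alpha> + real k))
       = (1+\<tau>\<^sup>2) powr (-\<alpha>) * (pochhammer \<alpha> k / fact k) * (\<tau>\<^sup>2/(1+\<tau>\<^sup>2))^k"
proof -
  define c where "c = 1/(2*\<tau>\<^sup>2) + 1/2"
  have tp: "1+\<tau>\<^sup>2 > 0" by (simp add: add_pos_nonneg)
  have c: "c > 0" unfolding c_def using ta by (simp add: add_pos_pos)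
  have c1: "c powr (\<alpha> + real k) = c powr \<alpha> * c^k" using c by (simp add: powr_add powr_realpow)
  have g: "Gamma (\<alpha> + real k) = pochhammer \<alpha> k * Gamma \<alpha>" using al by (rule Gamma_shift)
  have Gp: "Gamma \<alpha> \<noteq> 0" using Gamma_real_pos[OF al] by linarith
  have "(1/(2*\<tau>\<^sup>2)) powr \<alpha> * Gamma (\<alpha> + real k) / (Gamma \<alpha> * 2^k * fact k * c powr (\<alpha> + real k))
      = ((1/(2*\<tau>\<^sup>2)) powr \<alpha> / c powr \<alpha>) * (pochhammer \<alpha> k / fact k) * (1 / (2^k * c^k))"
    unfolding c1 g using c Gp by (intro aux4) auto
  also have "(1/(2*\<tau>\<^sup>2)) powr \<alpha> / c powr \<alpha> = (1+\<tau>\<^sup>2) powr (-\<alpha>)"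
  proof -
    have "(1/(2*\<tau>\<^sup>2)) powr \<alpha> / c powr \<alpha> = ((1/(2*\<tau>\<^sup>2)) / c) powr \<alpha>"
      using c ta by (subst powr_divide) auto
    also have "(1/(2*\<tau>\<^sup>2)) / c = inverse (1+\<tau>\<^sup>2)" using ta unfolding c_def by (simp add: field_simps)
    also have "inverse (1+\<tau>\<^sup>2) powr \<alpha> = (1+\<tau>\<^sup>2) powr (-\<alpha>)"
      by (simp add: powr_minus inverse_powr)
    finally show ?thesis .
  qed
  also have "1 / (2^k * c^k) = (\<tau>\<^sup>2/(1+\<tau>\<^sup>2))^k"
  proof -
    have "1 / (2^k * c^k) = (1/(2*c))^k" by (simp add: power_mult_distrib power_divide)
    also have "1/(2*c) = \<tau>\<^sup>2/(1+\<tau>\<^sup>2)" using tp ta unfolding c_def by (simp add: field_simps)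
    finally show ?thesis .
  qed
  finally show ?thesis unfolding c_def .
qed



lemma ncF_zero:
  fixes a b f :: real assumes a: "a>0" and b: "b>0" and f: "f>0"
  shows "ncF_density a b 0 f = F_density a b f"
proof -
  have "ncF_density a b 0 f = (\<Sum>k\<in>{0}. exp (- 0 / 2) * (0 / 2) ^ k / fact k
           * (a / b) powr (a / 2 + real k) * f powr (a / 2 + real k - 1)
           * (1 + a * f / b) powr (- (a + b) / 2 - real k)
           / Beta (a / 2 + real k) (b / 2))"
    unfolding ncF_density_def using f by (subst suminf_finite[of "{0}"]) auto
  also have "\<dots> = F_density a b f" using f by (simp add: F_density_def)
  finally show ?thesis .
qed

lemma TW_eq:
  fixes F0 P y q pa pb pc fk :: real
  assumes "pc \<noteq> 0" "fk \<noteq> 0"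
  shows "(F0 * y^k * pb / pc) * (P * (pa / fk) * q^k) = F0 * P * (pa * pb / (pc * fk) * (q*y)^k)"
  using assms by (simp add: field_simps power_mult_distrib)

lemma m1_eq:
  fixes a b f \<tau> :: real assumes a: "a>0" and b: "b>0" and f: "f>0" and ta: "\<tau> > 0"
  shows "m1 a b \<tau> f = F_density a b f * (1 + \<tau>\<^sup>2) powr (- a / 2 - 1)
             * hyp2F1 (a / 2 + 1) ((a + b) / 2) (a / 2)
                 (a * f * \<tau>\<^sup>2 / ((1 + \<tau>\<^sup>2) * (b + a * f)))"
proof -
  define \<alpha> where "\<alpha> = a/2 + 1"
  define \<theta> where "\<theta> = 1/(2*\<tau>\<^sup>2)"
  define y where "y = a*f/(b+a*f)"
  define q where "q = \<tau>\<^sup>2/(1+\<tau>\<^sup>2)"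
  define F0 where "F0 = F_density a b f"
  define P where "P = (1+\<tau>\<^sup>2) powr (-\<alpha>)"
  define T where "T = (\<lambda>k::nat. (a/b) powr (a/2 + real k) * f powr (a/2 + real k - 1)
          * (1 + a*f/b) powr (-(a+b)/2 - real k) / Beta (a/2 + real k) (b/2))"
  define W where "W = (\<lambda>k::nat. \<theta> powr \<alpha> * Gamma (\<alpha> + real k) / (Gamma \<alpha> * 2^k * fact k * (\<theta> + 1/2) powr (\<alpha> + real k)))"
  define h where "h = (\<lambda>k::nat. pochhammer \<alpha> k * pochhammer ((a+b)/2) k / (pochhammer (a/2) k * fact k) * (q*y)^k)"
  have al: "\<alpha> > 0" unfolding \<alpha>_def using a by simp
  have th: "\<theta> > 0" unfolding \<theta>_def using ta by simp
  have tp: "1+\<tau>\<^sup>2 > 0" by (simp add: add_pos_nonneg)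
  have bf: "0 < b + a*f" using a b f by (simp add: add_pos_pos)
  have y01: "0 \<le> y" "y < 1" unfolding y_def using a b f bf by (auto simp: field_simps)
  have q01: "0 \<le> q" "q < 1" unfolding q_def using tp by (auto simp: field_simps)
  have qy: "0 \<le> q*y" "q*y < 1"
    using y01 q01 by (auto intro: mult_nonneg_nonneg le_less_trans[OF mult_left_le[of y q]])
  have hs: "summable h" unfolding h_def
    by (rule hyp_summable) (use al a b qy in auto)
  have T0: "T k \<ge> 0" for k unfolding T_def using a b by (auto simp: Beta_def intro!: divide_nonneg_pos)
  have TW: "T k * W k = F0 * P * h k" for k
  proof -
    have e1: "T k = F0 * y^k * pochhammer ((a+b)/2) k / pochhammer (a/2) k"
      unfolding T_def F0_def y_def using T_eq[OF a b f] .
    have e2: "W k = P * (pochhammer \<alpha> k / fact k) * q^k"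
      unfolding W_def P_def q_def \<theta>_def using W_eq[OF al ta] .
    have "pochhammer (a/2) k \<noteq> 0" using pochhammer_pos[of "a/2" k] a by simp
    then show ?thesis unfolding h_def e1 e2 by (rule TW_eq) simp
  qed
  have TWs: "summable (\<lambda>k. T k * W k)" unfolding TW using hs by (rule summable_mult)
  define S where "S = (\<Sum>k. T k * W k)"
  have W0: "W k \<ge> 0" for k unfolding W_def using al th by (auto intro!: divide_nonneg_nonneg mult_nonneg_nonneg less_imp_le)
  have S0: "S \<ge> 0" unfolding S_def using T0 W0 by (intro suminf_nonneg TWs) auto
  have S_eq: "S = F0 * P * hyp2F1 \<alpha> ((a+b)/2) (a/2) (q*y)"
  proof -
    have "S = (\<Sum>k. F0*P*h k)" unfolding S_def TW ..
    also have "\<dots> = F0*P * suminf h" by (rule suminf_mult[OF hs])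
    also have "suminf h = hyp2F1 \<alpha> ((a+b)/2) (a/2) (q*y)" unfolding hyp2F1_def h_def ..
    finally show ?thesis .
  qed
  define g where "g = gamma_density \<alpha> \<theta>"
  define u where "u = (\<lambda>k lam. exp (- lam / 2) * (lam / 2) ^ k / fact k * T k * g lam)"
  have ncF: "ncF_density a b lam f = (\<Sum>k. exp (- lam / 2) * (lam / 2) ^ k / fact k * T k)" for lam
    unfolding ncF_density_def T_def using f by (simp add: mult.assoc)
  have u0: "u k lam \<ge> 0" for k lam
  proof (cases "lam > 0")
    case True
    then show ?thesis unfolding u_def g_def gamma_density_def if_P[OF True] using T0[of k] th al
      by (intro mult_nonneg_nonneg divide_nonneg_nonneg) (auto intro: less_imp_le)
  next
    case False
    then show ?thesis unfolding u_def g_def gamma_density_def by simp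
  qed
  have um[measurable]: "(\<lambda>lam. u k lam) \<in> borel_measurable borel" for k
    unfolding u_def g_def gamma_density_def by measurable
  have um': "(\<lambda>lam. u k lam) \<in> borel_measurable lborel" for k
    using um by simp
  have ui: "(\<integral>\<^sup>+lam. ennreal (u k lam) \<partial>lborel) = ennreal (T k * W k)" for k
    unfolding u_def g_def W_def by (rule term_integral[OF al th T0])
  have N: "(\<integral>\<^sup>+lam. (\<Sum>k. ennreal (u k lam)) \<partial>lborel) = ennreal S"
  proof -
    have "(\<integral>\<^sup>+lam. (\<Sum>k. ennreal (u k lam)) \<partial>lborel) = (\<Sum>k. \<integral>\<^sup>+lam. ennreal (u k lam) \<partial>lborel)"
      by (rule nn_integral_suminf) (use um' in measurable)
    also have "\<dots> = (\<Sum>k. ennreal (T k * W k))" by (simp add: ui)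
    also have "\<dots> = ennreal S" unfolding S_def
      by (rule suminf_ennreal2) (use T0 W0 TWs in auto)
    finally show ?thesis .
  qed
  have sm: "(\<lambda>lam. \<Sum>k. ennreal (u k lam)) \<in> borel_measurable lborel"
    using um' by measurable
  have AEfin: "AE lam in lborel. (\<Sum>k. ennreal (u k lam)) \<noteq> \<infinity>"
    by (rule nn_integral_PInf_AE[OF sm]) (simp add: N)
  have AEeq: "AE lam in lborel. ennreal (ncF_density a b lam f * g lam) = (\<Sum>k. ennreal (u k lam))
                 \<and> 0 \<le> ncF_density a b lam f * g lam"
    using AEfin
  proof eventually_elim
    case (elim lam)
    have su: "summable (\<lambda>k. u k lam)"
      by (rule summable_suminf_not_top) (use u0 elim in auto)
    have eq: "ncF_density a b lam f * g lam = (\<Sum>k. u k lam)"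
    proof (cases "g lam = 0")
      case True
      then show ?thesis unfolding u_def by simp
    next
      case False
      have "summable (\<lambda>k. u k lam / g lam)" using su by (rule summable_divide)
      also have "(\<lambda>k. u k lam / g lam) = (\<lambda>k. exp (- lam / 2) * (lam / 2) ^ k / fact k * T k)"
        unfolding u_def using False by auto
      finally have st: "summable (\<lambda>k. exp (- lam / 2) * (lam / 2) ^ k / fact k * T k)" .
      show ?thesis unfolding ncF u_def by (rule suminf_mult2[OF st])
    qed
    have nn: "0 \<le> (\<Sum>k. u k lam)" by (rule suminf_nonneg[OF su u0])
    show ?case unfolding eq using suminf_ennreal2[of "\<lambda>k. u k lam", OF u0 su] nn by simp
  qed
  have Nh: "(\<integral>\<^sup>+lam. ennreal (ncF_density a b lam f * g lam) \<partial>lborel) = ennreal S"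
    unfolding N[symmetric] by (rule nn_integral_cong_AE) (use AEeq in auto)
  have hm: "(\<lambda>lam. ncF_density a b lam f * g lam) \<in> borel_measurable lborel"
    unfolding ncF_density_def g_def gamma_density_def by measurable
  have "m1 a b \<tau> f = (LINT lam|lborel. ncF_density a b lam f * g lam)"
    unfolding m1_def g_def \<alpha>_def \<theta>_def ..
  also have "\<dots> = enn2real (ennreal S)"
    by (subst integral_eq_nn_integral[OF hm]) (use AEeq Nh in auto)
  also have "\<dots> = S" using S0 by simp
  also have "\<dots> = F0 * P * hyp2F1 \<alpha> ((a+b)/2) (a/2) (q*y)" by (rule S_eq)
  also have "P = (1 + \<tau>\<^sup>2) powr (- a / 2 - 1)" unfolding P_def \<alpha>_def by (rule arg_cong[where f="\<lambda>e. (1 + \<tau>\<^sup>2) powr e"]) simp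
  also have "q * y = a * f * \<tau>\<^sup>2 / ((1 + \<tau>\<^sup>2) * (b + a * f))" unfolding q_def y_def by (simp add: field_simps)
  finally show ?thesis unfolding F0_def \<alpha>_def .
qed


theorem proposition7:
  fixes \<omega> \<tau> a b f :: real
  assumes "0 < \<omega>" "\<omega> < 1 / 2" "\<tau> > 0" "a > 0" "b > 0" "f > 0"
  defines "R \<equiv> m1 a b \<tau> f / F_density a b f"
  shows "BF10 a b \<tau> \<omega> f = (\<omega> + (1 - \<omega>) * R) / ((1 - \<omega>) + \<omega> * R)
         \<and> R = (1 + \<tau>\<^sup>2) powr (- a / 2 - 1)
             * hyp2F1 (a / 2 + 1) ((a + b) / 2) (a / 2)
                 (a * f * \<tau>\<^sup>2 / ((1 + \<tau>\<^sup>2) * (b + a * f)))"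
proof -
  have a: "a > 0" and b: "b > 0" and f: "f > 0" and ta: "\<tau> > 0" using assms by auto
  have hp: "1 + a*f/b > 0" using a b f by (simp add: add_pos_pos)
  have Bp: "Beta (a/2) (b/2) > 0" using a b by (simp add: Beta_def)
  have F0: "F_density a b f > 0" unfolding F_density_def using f a b hp Bp
    by (simp add: divide_pos_pos)
  have m: "m1 a b \<tau> f = R * F_density a b f" using F0 unfolding R_def by simp
  have part2: "R = (1 + \<tau>\<^sup>2) powr (- a / 2 - 1)
             * hyp2F1 (a / 2 + 1) ((a + b) / 2) (a / 2)
                 (a * f * \<tau>\<^sup>2 / ((1 + \<tau>\<^sup>2) * (b + a * f)))"
    unfolding R_def m1_eq[OF a b f ta] using F0 by simp
  have "BF10 a b \<tau> \<omega> f = ((1 - (1 - \<omega>)) * F_density a b f + (1 - \<omega>) * m1 a b \<tau> f)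
        / ((1 - \<omega>) * F_density a b f + \<omega> * m1 a b \<tau> f)"
    unfolding BF10_def spike_slab_marginal_def m1_def[symmetric] ncF_zero[OF a b f] ..
  also have "\<dots> = ((\<omega> + (1 - \<omega>) * R) * F_density a b f) / (((1 - \<omega>) + \<omega> * R) * F_density a b f)"
    unfolding m by (simp add: algebra_simps)
  also have "\<dots> = (\<omega> + (1 - \<omega>) * R) / ((1 - \<omega>) + \<omega> * R)"
    using F0 by simp
  finally show ?thesis using part2 by blast
qed

end
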